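(* Let $S$ be a primitive substitution over a finite alphabet $\mathcal{A}$ with linear repetitivity constant $C_S$ and Perron–Frobenius eigenvalue $\theta_S$, let $r\in\mathbb{N}$ and $\omega_0\in\mathcal{A}^{\mathbb{Z}}$. (1) If $n\ge N_1(r):=\frac{\log r}{\log\theta_S}+\frac{\log C_S-\log\check C(S)}{\log\theta_S}$, then $W(\Omega_n(\omega_0))_r\supseteq W(S)_r$. (2) If $\omega_0$ is a good approximant and $n>N_2(r):=\frac{\log r}{\log\theta_S}-\frac{\log(2\check C(S))}{\log\theta_S}+|\mathcal{A}|^2$, then $W(\Omega_n(\omega_0))_r\subseteq W(S)_r$.
   Context: Words are finite strings over $\mathcal{A}$; $u\prec w$ means contiguous subword; $|u|$ is length. A substitution $S:\mathcal{A}\to\mathcal{A}^+$ extends to words and configurations $\omega:\mathbb{Z}\to\mathcal{A}$ by concatenation (with $S(\omega(0))$ starting at $0$); it is primitive if for some $p$, every letter occurs in $S^p(a)$ for every $a$. $\theta_S$ is the Perron–Frobenius eigenvalue of the substitution matrix (entry $(i,j)$ = number of occurrences of $a_i$ in $S(a_j)$). $\check C(S),\hat C(S)>0$ are fixed constants with $\check C(S)\theta_S^n\le|S^n(a)|\le\hat C(S)\theta_S^n$ for all $a\in\mathcal{A}$, $n\in\mathbb{N}$. Legal words $W(S)$: subwords of some $S^n(a)$. $C_S\ge1$ is a linear repetitivity constant: for all $u,w\in W(S)$ with $|w|\ge C_S|u|$, $u\prec w$. For a subshift $\Omega$, $W(\Omega)$ is the set of finite subwords of its elements and $W(\cdot)_r$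 the subset of length-$r$ words. $\Omega_n(\omega_0)$ is the closure of the shift-orbit of $S^n(\omega_0)$. $G(S)$ is the directed graph on $\mathcal{A}^2$ with edge $u\to w$ iff $u,w\notin W(S)$ and $w\prec S(u)$; $\omega_0$ is a good approximant if every directed path in $G(S)$ starting at a length-$2$ subword of $\omega_0$ contains no closed subpath. *)

theory Defs
  imports Complex_Main "HOL-Library.Sublist"
begin

text \<open>Words are lists over an alphabet of finite type 'a; a substitution is
  S :: 'a \<Rightarrow> 'a list with nonempty images. Contiguous subword is sublist.\<close>

definition nonerasing :: "('a \<Rightarrow> 'a list) \<Rightarrow> bool" where
  "nonerasing S \<longleftrightarrow> (\<forall>a. S a \<noteq> [])"

definition subst_word :: "('a \<Rightarrow> 'a list) \<Rightarrow> 'a list \<Rightarrow> 'a list" where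
  "subst_word S w = concat (map S w)"

definition primitive_subst :: "('a \<Rightarrow> 'a list) \<Rightarrow> bool" where
  "primitive_subst S \<longleftrightarrow> (\<exists>p. \<forall>a b. b \<in> set ((subst_word S ^^ p) [a]))"

definition subst_matrix :: "('a \<Rightarrow> 'a list) \<Rightarrow> 'a \<Rightarrow> 'a \<Rightarrow> nat" where
  "subst_matrix S i j = count_list (S j) i"

definition pf_eigenvalue :: "('a::finite \<Rightarrow> 'a list) \<Rightarrow> real \<Rightarrow> bool" where
  "pf_eigenvalue S \<theta> \<longleftrightarrow>
     (\<exists>v::'a \<Rightarrow> real. v \<noteq> (\<lambda>_. 0) \<and>
        (\<forall>i. (\<Sum>j\<in>UNIV. real (subst_matrix S i j) * v j) = \<theta> * v i)) \<and>
     (\<forall>(\<mu>::complex) (w::'a \<Rightarrow> complex). w \<noteq> (\<lambda>_. 0) \<and>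
        (\<forall>i. (\<Sum>j\<in>UNIV. of_nat (subst_matrix S i j) * w j) = \<mu> * w i) \<longrightarrow> cmod \<mu> \<le> \<theta>)"

definition legal_words :: "('a \<Rightarrow> 'a list) \<Rightarrow> 'a list set" where
  "legal_words S = {u. \<exists>n a. sublist u ((subst_word S ^^ n) [a])}"

definition lin_rep_const :: "('a \<Rightarrow> 'a list) \<Rightarrow> real \<Rightarrow> bool" where
  "lin_rep_const S C \<longleftrightarrow> C \<ge> 1 \<and>
     (\<forall>u \<in> legal_words S. \<forall>w \<in> legal_words S.
        real (length w) \<ge> C * real (length u) \<longrightarrow> sublist u w)"

text \<open>Length bound constants: check_C * theta^n \<le> |S^n(a)| \<le> hat_C * theta^n.\<close>
definition growth_consts :: "('a \<Rightarrow> 'a list) \<Rightarrow> real \<Rightarrow> real \<Rightarrow> real \<Rightarrow> bool" where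
  "growth_consts S \<theta> Cc Ch \<longleftrightarrow> Cc > 0 \<and> Ch > 0 \<and>
     (\<forall>a n. Cc * \<theta> ^ n \<le> real (length ((subst_word S ^^ n) [a])) \<and>
            real (length ((subst_word S ^^ n) [a])) \<le> Ch * \<theta> ^ n)"

text \<open>Substitution on configurations Z \<rightarrow> A: concatenation with S(\<omega>(0)) starting
  at position 0. conf_pos gives the starting position of the block S(\<omega>(k)).\<close>
definition conf_pos :: "('a \<Rightarrow> 'a list) \<Rightarrow> (int \<Rightarrow> 'a) \<Rightarrow> int \<Rightarrow> int" where
  "conf_pos S \<omega> k =
     (if k \<ge> 0 then int (\<Sum>i<nat k. length (S (\<omega> (int i))))
      else - int (\<Sum>i\<in>{k..<0}. length (S (\<omega> i))))"

definition subst_conf :: "('a \<Rightarrow> 'a list) \<Rightarrow> (int \<Rightarrow> 'a) \<Rightarrow> int \<Rightarrow> 'a" where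
  "subst_conf S \<omega> m =
     (let k = (THE k. conf_pos S \<omega> k \<le> m \<and> m < conf_pos S \<omega> (k + 1))
      in S (\<omega> k) ! nat (m - conf_pos S \<omega> k))"

text \<open>Closure of the shift orbit of x in A^Z (product of discrete topologies):
  \<omega> is in it iff every central window of \<omega> appears in x at some shift.\<close>
definition orbit_closure :: "(int \<Rightarrow> 'a) \<Rightarrow> (int \<Rightarrow> 'a) set" where
  "orbit_closure x = {\<omega>. \<forall>N::nat. \<exists>k::int. \<forall>i::int. \<bar>i\<bar> \<le> int N \<longrightarrow> \<omega> i = x (i + k)}"

definition Omega_n :: "('a \<Rightarrow> 'a list) \<Rightarrow> nat \<Rightarrow> (int \<Rightarrow> 'a) \<Rightarrow> (int \<Rightarrow> 'a) set" where
  "Omega_n S n \<omega>0 = orbit_closure ((subst_conf S ^^ n) \<omega>0)"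

definition conf_words :: "(int \<Rightarrow> 'a) set \<Rightarrow> 'a list set" where
  "conf_words \<Omega> = {u. \<exists>\<omega>\<in>\<Omega>. \<exists>i::int. u = map (\<lambda>j. \<omega> (i + int j)) [0..<length u]}"

definition words_of_len :: "'a list set \<Rightarrow> nat \<Rightarrow> 'a list set" where
  "words_of_len W r = {u \<in> W. length u = r}"

definition G_edge :: "('a \<Rightarrow> 'a list) \<Rightarrow> 'a list \<Rightarrow> 'a list \<Rightarrow> bool" where
  "G_edge S u w \<longleftrightarrow> length u = 2 \<and> length w = 2 \<and>
     u \<notin> legal_words S \<and> w \<notin> legal_words S \<and> sublist w (subst_word S u)"

definition G_path :: "('a \<Rightarrow> 'a list) \<Rightarrow> 'a list list \<Rightarrow> bool" where
  "G_path S vs \<longleftrightarrow> vs \<noteq> [] \<and> length (hd vs) = 2 \<and>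
     (\<forall>i. Suc i < length vs \<longrightarrow> G_edge S (vs ! i) (vs ! Suc i))"

text \<open>Good approximant: no directed path starting at a length-2 subword of \<omega>0
  contains a closed subpath (i.e. it never revisits a vertex).\<close>
definition good_approximant :: "('a \<Rightarrow> 'a list) \<Rightarrow> (int \<Rightarrow> 'a) \<Rightarrow> bool" where
  "good_approximant S \<omega>0 \<longleftrightarrow>
     (\<forall>vs. G_path S vs \<and> (\<exists>i. hd vs = [\<omega>0 i, \<omega>0 (i + 1)]) \<longrightarrow> distinct vs)"

end

theory Submission
  imports Defs
begin


lemma conf_pos_0: "conf_pos S \<omega> 0 = 0"
  by (simp add: conf_pos_def)

lemma conf_pos_step: "conf_pos S \<omega> (k+1) = conf_pos S \<omega> k + int (length (S (\<omega> k)))"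
proof (cases "k \<ge> 0")
  case True
  then have "nat (k+1) = Suc (nat k)" by simp
  then show ?thesis using True by (simp add: conf_pos_def)
next
  case False
  show ?thesis
  proof (cases "k = -1")
    case True
    have "{-1..<0::int} = {-1}" by auto
    then show ?thesis using True by (simp add: conf_pos_def)
  next
    case F2: False
    have "{k..<0} = insert k {k+1..<0}" using False by auto
    then have "(\<Sum>i\<in>{k..<0}. length (S (\<omega> i))) = length (S (\<omega> k)) + (\<Sum>i\<in>{k+1..<0}. length (S (\<omega> i)))"
      by simp
    then show ?thesis using False F2 by (simp add: conf_pos_def)
  qed
qed

lemma conf_pos_unique:
  assumes "Q 0 = 0" "\<And>k. Q (k+1) = Q k + int (length (S (\<omega> k)))"
  shows "Q k = conf_pos S \<omega> k"
proof (induction k rule: int_induct[where k=0])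
  case base then show ?case using assms by (simp add: conf_pos_0)
next
  case (step1 i) then show ?case using assms(2)[of i] conf_pos_step[of S \<omega> i] by simp
next
  case (step2 i)
  have "Q (i - 1 + 1) = Q (i-1) + int (length (S (\<omega> (i-1))))" by (rule assms(2))
  moreover have "conf_pos S \<omega> (i - 1 + 1) = conf_pos S \<omega> (i-1) + int (length (S (\<omega> (i-1))))" by (rule conf_pos_step)
  ultimately show ?case using step2 by simp
qed

lemma conf_pos_less:
  assumes "nonerasing S" shows "conf_pos S \<omega> k < conf_pos S \<omega> (k+1)"
proof -
  have "S (\<omega> k) \<noteq> []" using assms by (simp add: nonerasing_def)
  then show ?thesis by (simp add: conf_pos_step)
qed

lemma conf_pos_mono:
  assumes "nonerasing S" "i < j" shows "conf_pos S \<omega> i < conf_pos S \<omega> j"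
  using assms(2)
proof (induction j rule: int_gr_induct)
  case base then show ?case using conf_pos_less[OF assms(1)] by blast
next
  case (step j) then show ?case using conf_pos_less[OF assms(1), of \<omega> j] by simp
qed

lemma conf_pos_locate_ex:
  assumes "nonerasing S" shows "\<exists>k. conf_pos S \<omega> k \<le> m \<and> m < conf_pos S \<omega> (k+1)"
proof (induction m rule: int_induct[where k=0])
  case base then show ?case using conf_pos_less[OF assms, of \<omega> 0] by (auto simp: conf_pos_0 intro!: exI[of _ 0])
next
  case (step1 i)
  then obtain k where k: "conf_pos S \<omega> k \<le> i" "i < conf_pos S \<omega> (k+1)" by blast
  show ?case
  proof (cases "i + 1 < conf_pos S \<omega> (k+1)")
    case True then show ?thesis using k by (intro exI[of _ k]) auto
  next
    case False
    then have "i + 1 = conf_pos S \<omega> (k+1)" using k by auto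
    then show ?thesis using conf_pos_less[OF assms, of \<omega> "k+1"] by (intro exI[of _ "k+1"]) auto
  qed
next
  case (step2 i)
  then obtain k where k: "conf_pos S \<omega> k \<le> i" "i < conf_pos S \<omega> (k+1)" by blast
  show ?case
  proof (cases "conf_pos S \<omega> k \<le> i - 1")
    case True then show ?thesis using k by (intro exI[of _ k]) auto
  next
    case False
    then have "i = conf_pos S \<omega> k" using k by auto
    then show ?thesis using conf_pos_less[OF assms, of \<omega> "k-1"] by (intro exI[of _ "k-1"]) auto
  qed
qed

lemma conf_pos_locate_unique:
  assumes "nonerasing S"
    "conf_pos S \<omega> k1 \<le> m" "m < conf_pos S \<omega> (k1+1)"
    "conf_pos S \<omega> k2 \<le> m" "m < conf_pos S \<omega> (k2+1)"
  shows "k1 = k2"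
proof (rule ccontr)
  assume "k1 \<noteq> k2"
  then consider "k1 < k2" | "k2 < k1" by linarith
  then show False
  proof cases
    case 1
    then have "k1 + 1 \<le> k2" by simp
    then have "conf_pos S \<omega> (k1+1) \<le> conf_pos S \<omega> k2"
      using conf_pos_mono[OF assms(1), of "k1+1" k2 \<omega>] by (cases "k1+1 = k2") auto
    then show False using assms by simp
  next
    case 2
    then have "k2 + 1 \<le> k1" by simp
    then have "conf_pos S \<omega> (k2+1) \<le> conf_pos S \<omega> k1"
      using conf_pos_mono[OF assms(1), of "k2+1" k1 \<omega>] by (cases "k2+1 = k1") auto
    then show False using assms by simp
  qed
qed

lemma subst_conf_at:
  assumes "nonerasing S" "j < length (S (\<omega> k))"
  shows "subst_conf S \<omega> (conf_pos S \<omega> k + int j) = S (\<omega> k) ! j"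
proof -
  let ?m = "conf_pos S \<omega> k + int j"
  have h: "conf_pos S \<omega> k \<le> ?m \<and> ?m < conf_pos S \<omega> (k+1)"
    using assms(2) by (simp add: conf_pos_step)
  have "(THE k'. conf_pos S \<omega> k' \<le> ?m \<and> ?m < conf_pos S \<omega> (k' + 1)) = k"
  proof (rule the_equality)
    show "conf_pos S \<omega> k \<le> ?m \<and> ?m < conf_pos S \<omega> (k+1)" by (rule h)
  next
    fix k' assume "conf_pos S \<omega> k' \<le> ?m \<and> ?m < conf_pos S \<omega> (k' + 1)"
    then show "k' = k" using conf_pos_locate_unique[OF assms(1)] h by blast
  qed
  then show ?thesis by (simp add: subst_conf_def Let_def)
qed

lemma subst_conf_cover:
  assumes "nonerasing S"
  shows "\<exists>k j. m = conf_pos S \<omega> k + int j \<and> j < length (S (\<omega> k))"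
proof -
  obtain k where k: "conf_pos S \<omega> k \<le> m" "m < conf_pos S \<omega> (k+1)"
    using conf_pos_locate_ex[OF assms] by blast
  show ?thesis
    apply (rule exI[of _ k], rule exI[of _ "nat (m - conf_pos S \<omega> k)"])
    using k by (simp add: conf_pos_step)
qed

lemma subst_word_append[simp]: "subst_word S (u @ v) = subst_word S u @ subst_word S v"
  by (simp add: subst_word_def)

lemma subst_word_simps[simp]: "subst_word S [] = []" "subst_word S (a # v) = S a @ subst_word S v"
  by (simp_all add: subst_word_def)

definition win :: "(int \<Rightarrow> 'a) \<Rightarrow> int \<Rightarrow> nat \<Rightarrow> 'a list" where
  "win \<omega> a d = map (\<lambda>i. \<omega> (a + int i)) [0..<d]"

lemma win_Suc: "win \<omega> a (Suc d) = win \<omega> a d @ [\<omega> (a + int d)]"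
  by (simp add: win_def)

lemma length_win[simp]: "length (win \<omega> a d) = d" by (simp add: win_def)

lemma nth_win[simp]: "j < d \<Longrightarrow> win \<omega> a d ! j = \<omega> (a + int j)" by (simp add: win_def)

lemma subst_conf_concat:
  assumes "nonerasing S"
  shows "conf_pos S \<omega> (a + int d) = conf_pos S \<omega> a + int (length (subst_word S (win \<omega> a d)))
     \<and> win (subst_conf S \<omega>) (conf_pos S \<omega> a) (length (subst_word S (win \<omega> a d))) = subst_word S (win \<omega> a d)"
proof (induction d)
  case 0 then show ?case by (simp add: win_def)
next
  case (Suc d)
  let ?W = "subst_word S (win \<omega> a d)"
  let ?B = "S (\<omega> (a + int d))"
  have pos: "conf_pos S \<omega> (a + int (Suc d)) = conf_pos S \<omega> a + int (length ?W) + int (length ?B)"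
  proof -
    have e: "a + int (Suc d) = (a + int d) + 1" by simp
    show ?thesis unfolding e using Suc.IH conf_pos_step[of S \<omega> "a + int d"] by simp
  qed
  have "win (subst_conf S \<omega>) (conf_pos S \<omega> a) (length ?W + length ?B) = ?W @ ?B"
  proof (rule nth_equalityI)
    show "length (win (subst_conf S \<omega>) (conf_pos S \<omega> a) (length ?W + length ?B)) = length (?W @ ?B)" by simp
  next
    fix j assume "j < length (win (subst_conf S \<omega>) (conf_pos S \<omega> a) (length ?W + length ?B))"
    then have j: "j < length ?W + length ?B" by simp
    show "win (subst_conf S \<omega>) (conf_pos S \<omega> a) (length ?W + length ?B) ! j = (?W @ ?B) ! j"
    proof (cases "j < length ?W")
      case True
      then have "win (subst_conf S \<omega>) (conf_pos S \<omega> a) (length ?W) ! j = ?W ! j"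
        using Suc.IH by simp
      then show ?thesis using True j by (simp add: nth_append)
    next
      case False
      define j' where "j' = j - length ?W"
      have j': "j' < length ?B" "j = length ?W + j'" using j False by (auto simp: j'_def)
      have "subst_conf S \<omega> (conf_pos S \<omega> a + int j) = subst_conf S \<omega> (conf_pos S \<omega> (a + int d) + int j')"
        using Suc.IH j' by (simp add: add.assoc)
      also have "\<dots> = ?B ! j'" by (rule subst_conf_at[where \<omega>=\<omega> and k="a + int d", OF assms j'(1)])
      finally show ?thesis using j j' by (simp add: nth_append)
    qed
  qed
  then show ?case using pos by (simp add: win_Suc)
qed

lemma win_one[simp]: "win \<omega> a 1 = [\<omega> a]" by (simp add: win_def)

lemma block_win:
  assumes "nonerasing T"
  shows "win (subst_conf T \<omega>) (conf_pos T \<omega> k) (length (T (\<omega> k))) = T (\<omega> k)"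
  using subst_conf_concat[OF assms, of \<omega> k 1] by (simp add: win_def)

lemma length_subst_word_ge:
  assumes "nonerasing S" shows "length w \<le> length (subst_word S w)"
proof (induction w)
  case (Cons a w)
  have "S a \<noteq> []" using assms by (simp add: nonerasing_def)
  then have "1 \<le> length (S a)" by (cases "S a") auto
  then show ?case using Cons by simp
qed simp

lemma nonerasing_comp:
  assumes "nonerasing S" "nonerasing T" shows "nonerasing (\<lambda>a. subst_word S (T a))"
  unfolding nonerasing_def
proof
  fix a
  have "T a \<noteq> []" using assms(2) by (simp add: nonerasing_def)
  then show "subst_word S (T a) \<noteq> []" using length_subst_word_ge[OF assms(1), of "T a"] by auto
qed

lemma subst_conf_comp:
  assumes S: "nonerasing S" and T: "nonerasing T"
  shows "subst_conf S (subst_conf T \<omega>) = subst_conf (\<lambda>a. subst_word S (T a)) \<omega>"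
proof
  fix m
  let ?Y = "subst_conf T \<omega>"
  let ?U = "\<lambda>a. subst_word S (T a)"
  have U: "nonerasing ?U" by (rule nonerasing_comp[OF S T])
  have bl: "win ?Y (conf_pos T \<omega> k) (length (T (\<omega> k))) = T (\<omega> k)" for k
    by (rule block_win[OF T])
  have Q: "conf_pos S ?Y (conf_pos T \<omega> k) = conf_pos ?U \<omega> k" for k
  proof (rule conf_pos_unique)
    show "conf_pos S ?Y (conf_pos T \<omega> 0) = 0" by (simp add: conf_pos_0)
  next
    fix k
    have "conf_pos S ?Y (conf_pos T \<omega> (k+1)) = conf_pos S ?Y (conf_pos T \<omega> k + int (length (T (\<omega> k))))"
      by (simp add: conf_pos_step)
    also have "\<dots> = conf_pos S ?Y (conf_pos T \<omega> k) + int (length (subst_word S (T (\<omega> k))))"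
      using subst_conf_concat[OF S, of ?Y "conf_pos T \<omega> k" "length (T (\<omega> k))"] bl[of k] by simp
    finally show "conf_pos S ?Y (conf_pos T \<omega> (k+1)) = conf_pos S ?Y (conf_pos T \<omega> k) + int (length (?U (\<omega> k)))" .
  qed
  obtain k j where kj: "m = conf_pos ?U \<omega> k + int j" "j < length (?U (\<omega> k))"
    using subst_conf_cover[OF U] by blast
  have rhs: "subst_conf ?U \<omega> m = ?U (\<omega> k) ! j" using subst_conf_at[where \<omega>=\<omega> and k=k, OF U kj(2)] kj(1) by simp
  have w: "win (subst_conf S ?Y) (conf_pos S ?Y (conf_pos T \<omega> k)) (length (?U (\<omega> k))) = ?U (\<omega> k)"
    using subst_conf_concat[OF S, of ?Y "conf_pos T \<omega> k" "length (T (\<omega> k))"] bl[of k] by simp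
  have "win (subst_conf S ?Y) (conf_pos S ?Y (conf_pos T \<omega> k)) (length (?U (\<omega> k))) ! j = subst_conf S ?Y m"
    using kj Q[of k] by simp
  then show "subst_conf S ?Y m = subst_conf ?U \<omega> m" using w rhs by simp
qed

lemma subst_conf_id: "subst_conf (\<lambda>x. [x]) \<omega> = \<omega>"
proof
  fix m
  have ne: "nonerasing (\<lambda>x. [x])" by (simp add: nonerasing_def)
  have P: "(\<lambda>k. k) k = conf_pos (\<lambda>x. [x]) \<omega> k" for k
    by (rule conf_pos_unique) auto
  show "subst_conf (\<lambda>x. [x]) \<omega> m = \<omega> m"
    using subst_conf_at[OF ne, of 0 \<omega> m] P[of m] by simp
qed

definition Tn :: "('a \<Rightarrow> 'a list) \<Rightarrow> nat \<Rightarrow> 'a \<Rightarrow> 'a list" where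
  "Tn S n a = (subst_word S ^^ n) [a]"

lemma length_iter_ge:
  assumes "nonerasing S" shows "length w \<le> length ((subst_word S ^^ n) w)"
  by (induction n) (auto intro: order_trans length_subst_word_ge[OF assms])

lemma nonerasing_Tn: assumes "nonerasing S" shows "nonerasing (Tn S n)"
  unfolding nonerasing_def Tn_def
proof
  fix a
  show "(subst_word S ^^ n) [a] \<noteq> []" using length_iter_ge[OF assms, of "[a]" n] by auto
qed

lemma iter_conf:
  assumes "nonerasing S" shows "(subst_conf S ^^ n) \<omega> = subst_conf (Tn S n) \<omega>"
proof (induction n)
  case 0 then show ?case by (simp add: Tn_def subst_conf_id)
next
  case (Suc n)
  have "(subst_conf S ^^ Suc n) \<omega> = subst_conf S (subst_conf (Tn S n) \<omega>)" using Suc by simp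
  also have "\<dots> = subst_conf (\<lambda>a. subst_word S (Tn S n a)) \<omega>"
    by (rule subst_conf_comp[OF assms nonerasing_Tn[OF assms]])
  also have "(\<lambda>a. subst_word S (Tn S n a)) = Tn S (Suc n)" by (simp add: Tn_def fun_eq_iff)
  finally show ?case .
qed



lemma four_split:
  assumes "sublist u ((X @ Y) @ (Z @ W))" "length u \<le> length Y" "length u \<le> length Z"
  shows "sublist u (X @ Y) \<or> sublist u (Y @ Z) \<or> sublist u (Z @ W)"
proof -
  { fix u1 u2 assume h: "u = u1 @ u2" "suffix u1 (X @ Y)" "prefix u2 (Z @ W)"
    have "suffix u1 Y" using suffix_length_suffix[OF h(2), of Y] h(1) assms(2) by (auto simp: suffix_def)
    moreover have "prefix u2 Z" using prefix_length_prefix[OF h(3), of Z] h(1) assms(3) by (auto simp: prefix_def)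
    ultimately obtain zs zsa where "Y = zs @ u1" "Z = u2 @ zsa" by (auto simp: suffix_def prefix_def)
    then have "Y @ Z = zs @ u @ zsa" using h(1) by simp
    then have "sublist u (Y @ Z)" by (metis sublist_appendI)
  }
  then show ?thesis using assms(1) unfolding sublist_append[of u "X @ Y"] by blast
qed

lemma iter_nil[simp]: "(subst_word S ^^ n) [] = []"
  by (induction n) auto

lemma iter_append[simp]: "(subst_word S ^^ n) (u @ v) = (subst_word S ^^ n) u @ (subst_word S ^^ n) v"
  by (induction n) auto

lemma iter_Cons: "(subst_word S ^^ n) (a # v) = Tn S n a @ (subst_word S ^^ n) v"
  using iter_append[where S=S and n=n and u="[a]" and v=v] by (simp add: Tn_def)

lemma iter_add: "(subst_word S ^^ (a + b)) w = (subst_word S ^^ a) ((subst_word S ^^ b) w)"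
  by (simp add: funpow_add)

lemma Tn_add: "Tn S (a + b) x = (subst_word S ^^ a) (Tn S b x)"
  by (simp add: Tn_def funpow_add)

lemma iter_sublist: "sublist u v \<Longrightarrow> sublist ((subst_word S ^^ n) u) ((subst_word S ^^ n) v)"
  by (auto simp: sublist_def) (metis sublist_appendI)

lemma legal_sub: "u \<in> legal_words S \<Longrightarrow> sublist v u \<Longrightarrow> v \<in> legal_words S"
  unfolding legal_words_def by (auto intro: sublist_order.order_trans)

lemma legal_iter: "u \<in> legal_words S \<Longrightarrow> (subst_word S ^^ n) u \<in> legal_words S"
proof -
  assume "u \<in> legal_words S"
  then obtain q a where "sublist u ((subst_word S ^^ q) [a])" by (auto simp: legal_words_def)
  then have "sublist ((subst_word S ^^ n) u) ((subst_word S ^^ (n + q)) [a])"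
    using iter_sublist[where S=S and n=n] by (simp add: iter_add)
  then show ?thesis by (auto simp: legal_words_def)
qed

lemma legal_Tn: "Tn S n a \<in> legal_words S"
  by (auto simp: legal_words_def Tn_def)

lemma legal_short: "length u \<le> 1 \<Longrightarrow> u \<in> legal_words S"
proof -
  assume "length u \<le> 1"
  then consider "u = []" | a where "u = [a]" by (cases u) auto
  then show ?thesis
  proof cases
    case 1 then show ?thesis by (auto simp: legal_words_def)
  next
    case 2 then show ?thesis unfolding legal_words_def by (auto intro!: exI[of _ 0])
  qed
qed

lemma length_iter: "length ((subst_word S ^^ n) w) = (\<Sum>a\<leftarrow>w. length (Tn S n a))"
  by (induction w) (auto simp: iter_Cons)

lemma length_iter_lower:
  assumes "\<And>a. c \<le> real (length (Tn S n a))"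
  shows "real (length w) * c \<le> real (length ((subst_word S ^^ n) w))"
proof (induction w)
  case (Cons a w)
  have "real (length ((subst_word S ^^ n) (a # w))) = real (length (Tn S n a)) + real (length ((subst_word S ^^ n) w))"
    by (simp add: iter_Cons)
  then show ?case using Cons assms[of a] by (simp add: algebra_simps)
qed simp



locale gsetup =
  fixes S :: "'a::finite \<Rightarrow> 'a list" and \<theta> Cc Ch :: real
  assumes ne: "nonerasing S" and gr: "growth_consts S \<theta> Cc Ch"
begin

lemma Cc_pos: "Cc > 0" and Ch_pos: "Ch > 0"
  using gr by (auto simp: growth_consts_def)

lemma Tn_lower: "Cc * \<theta> ^ n \<le> real (length (Tn S n a))"
  using gr by (simp add: growth_consts_def Tn_def)

lemma Tn_upper: "real (length (Tn S n a)) \<le> Ch * \<theta> ^ n"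
  using gr by (simp add: growth_consts_def Tn_def)

lemma Tn_len_ge1: "1 \<le> length (Tn S n a)"
  using nonerasing_Tn[OF ne] by (cases "Tn S n a") (auto simp: nonerasing_def)

lemma Cc_le1: "Cc \<le> 1"
  using Tn_lower[of 0] by (simp add: Tn_def)

lemma theta_ge1: "\<theta> \<ge> 1"
proof (rule ccontr)
  assume "\<not> \<theta> \<ge> 1"
  then have lt: "\<theta> < 1" by simp
  obtain a :: 'a where True by simp
  have "1 \<le> Ch * \<theta>" using Tn_upper[of 1 a] Tn_len_ge1[of 1 a] by simp
  then have tp: "\<theta> > 0" using Ch_pos by (smt (verit) mult_nonneg_nonpos)
  then have "1 < 1 / \<theta>" using lt by simp
  then obtain n where n: "Ch < (1/\<theta>) ^ n" using real_arch_pow by blast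
  then have "Ch * \<theta> ^ n < 1" using tp by (simp add: power_divide field_simps)
  then show False using Tn_upper[of n a] Tn_len_ge1[of n a] by simp
qed

lemma Tn_mono_len: "j \<le> q \<Longrightarrow> length (Tn S j x) \<le> length (Tn S q x)"
proof -
  assume "j \<le> q"
  then have "q = (q - j) + j" by simp
  then have "Tn S q x = (subst_word S ^^ (q - j)) (Tn S j x)" by (metis Tn_add)
  then show ?thesis using length_iter_ge[OF ne] by simp
qed

lemma Tn_ge2:
  assumes th: "\<theta> > 1"
  shows "2 \<le> length (Tn S (card (UNIV::'a set)) x)"
proof (rule ccontr)
  let ?k = "card (UNIV::'a set)"
  assume "\<not> 2 \<le> length (Tn S ?k x)"
  then have lk: "length (Tn S ?k x) \<le> 1" by simp
  define f where "f j = hd (Tn S j x)" for j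
  have one: "Tn S j x = [f j]" if "j \<le> ?k" for j
  proof -
    have "length (Tn S j x) = 1" using Tn_mono_len[OF that, of x] lk Tn_len_ge1[of j x] by simp
    then show ?thesis unfolding f_def by (cases "Tn S j x") auto
  qed
  have "\<not> inj_on f {0..?k}"
  proof
    assume "inj_on f {0..?k}"
    then have "card {0..?k} \<le> card (UNIV :: 'a set)" by (rule card_inj_on_le) auto
    then show False by simp
  qed
  then obtain i j where ij: "i \<le> ?k" "j \<le> ?k" "i \<noteq> j" "f i = f j"
    unfolding inj_on_def by auto
  obtain i j where ij: "i < j" "j \<le> ?k" "f i = f j"
  proof (cases "i < j")
    case True then show ?thesis using ij that by auto
  next
    case False then show ?thesis using ij that[of j i] by auto
  qed
  define d where "d = j - i"
  define y where "y = f i"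
  have dpos: "d > 0" using ij by (simp add: d_def)
  have "Tn S j x = (subst_word S ^^ d) (Tn S i x)" using Tn_add[of S d i x] ij by (simp add: d_def)
  then have per: "Tn S d y = [y]" using one[of i] one[of j] ij by (simp add: y_def Tn_def)
  have perl: "Tn S (l * d) y = [y]" for l
  proof (induction l)
    case 0 then show ?case by (simp add: Tn_def)
  next
    case (Suc l)
    have "Tn S (Suc l * d) y = Tn S (d + l * d) y" by simp
    also have "\<dots> = (subst_word S ^^ d) (Tn S (l * d) y)" by (rule Tn_add)
    also have "\<dots> = [y]" using Suc per by (simp add: Tn_def)
    finally show ?case .
  qed
  have "1 < \<theta> ^ d" using th dpos by (simp add: one_less_power)
  then obtain l where l: "1 / Cc < (\<theta> ^ d) ^ l" using real_arch_pow by blast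
  have "Cc * \<theta> ^ (l * d) \<le> 1" using Tn_lower[of "l * d" y] perl[of l] by simp
  moreover have "(\<theta> ^ d) ^ l = \<theta> ^ (l * d)" by (simp add: power_mult mult.commute)
  ultimately show False using l Cc_pos by (simp add: field_simps)
qed

lemma Tn_ge2':
  assumes "\<theta> > 1" "card (UNIV::'a set) \<le> q" shows "2 \<le> length (Tn S q x)"
  using Tn_ge2[OF assms(1), of x] Tn_mono_len[OF assms(2), of x] by simp

lemma Tn_big:
  assumes "\<theta> > 1" "t + card (UNIV::'a set) \<le> N" shows "2 * Cc * \<theta> ^ t \<le> real (length (Tn S N x))"
proof -
  have "N = t + (N - t)" using assms by simp
  then have e: "Tn S N x = (subst_word S ^^ t) (Tn S (N - t) x)" by (metis Tn_add)
  have "2 \<le> length (Tn S (N - t) x)" using Tn_ge2'[OF assms(1)] assms(2) by simp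
  then have "2 * (Cc * \<theta> ^ t) \<le> real (length (Tn S (N - t) x)) * (Cc * \<theta> ^ t)"
    using Cc_pos theta_ge1 by (intro mult_right_mono) auto
  also have "\<dots> \<le> real (length (Tn S N x))" unfolding e by (rule length_iter_lower[OF Tn_lower])
  finally show ?thesis by simp
qed

end



primrec bseq :: "('a \<Rightarrow> 'a list) \<Rightarrow> 'a \<Rightarrow> nat \<Rightarrow> 'a" where
  "bseq S b 0 = b" | "bseq S b (Suc j) = last (S (bseq S b j))"

primrec cseq :: "('a \<Rightarrow> 'a list) \<Rightarrow> 'a \<Rightarrow> nat \<Rightarrow> 'a" where
  "cseq S c 0 = c" | "cseq S c (Suc j) = hd (S (cseq S c j))"

lemma Tn_Suc: "Tn S (Suc j) b = subst_word S (Tn S j b)"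
  by (simp add: Tn_def)

lemma bseq_dec:
  assumes "nonerasing S" shows "\<exists>pre. Tn S j b = pre @ [bseq S b j]"
proof (induction j)
  case 0 then show ?case by (simp add: Tn_def)
next
  case (Suc j)
  then obtain pre where p: "Tn S j b = pre @ [bseq S b j]" by blast
  have ne: "S (bseq S b j) \<noteq> []" using assms by (simp add: nonerasing_def)
  have "Tn S (Suc j) b = subst_word S pre @ butlast (S (bseq S b j)) @ [last (S (bseq S b j))]"
    using p append_butlast_last_id[OF ne] by (simp add: Tn_Suc)
  then show ?case by auto
qed

lemma cseq_dec:
  assumes "nonerasing S" shows "\<exists>post. Tn S j c = cseq S c j # post"
proof (induction j)
  case 0 then show ?case by (simp add: Tn_def)
next
  case (Suc j)
  then obtain post where p: "Tn S j c = cseq S c j # post" by blast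
  have ne: "S (cseq S c j) \<noteq> []" using assms by (simp add: nonerasing_def)
  have "Tn S (Suc j) c = hd (S (cseq S c j)) # tl (S (cseq S c j)) @ subst_word S post"
    using p ne by (simp add: Tn_Suc)
  then show ?case by auto
qed

lemma edge_sub:
  assumes "nonerasing S"
  shows "sublist [bseq S b (Suc j), cseq S c (Suc j)] (subst_word S [bseq S b j, cseq S c j])"
proof -
  have n1: "S (bseq S b j) \<noteq> []" and n2: "S (cseq S c j) \<noteq> []" using assms by (auto simp: nonerasing_def)
  obtain B l where Bl: "S (bseq S b j) = B @ [l]" using n1 by (metis append_butlast_last_id)
  obtain h T where hT: "S (cseq S c j) = h # T" using n2 by (cases "S (cseq S c j)") auto
  have "subst_word S [bseq S b j, cseq S c j] = B @ [l, h] @ T" using Bl hT by simp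
  moreover have "bseq S b (Suc j) = l" "cseq S c (Suc j) = h" using Bl hT by simp_all
  ultimately show ?thesis by (metis sublist_appendI)
qed

definition L2 :: "('a \<Rightarrow> 'a list) \<Rightarrow> 'a list set" where
  "L2 S = {u. length u = 2 \<and> u \<in> legal_words S}"
definition I2 :: "('a \<Rightarrow> 'a list) \<Rightarrow> 'a list set" where
  "I2 S = {u. length u = 2 \<and> u \<notin> legal_words S}"

lemma A2_finite: "finite {u :: ('a::finite) list. length u = 2}"
  using finite_lists_length_eq[of "UNIV :: 'a set" 2] by simp

lemma A2_card: "card {u :: ('a::finite) list. length u = 2} = card (UNIV :: 'a set) ^ 2"
  using card_lists_length_eq[of "UNIV :: 'a set" 2] by simp

lemma I2_card: "card (I2 (S :: 'a::finite \<Rightarrow> 'a list)) = card (UNIV :: 'a set) ^ 2 - card (L2 S)"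
proof -
  have "I2 S = {u. length u = 2} - L2 S" by (auto simp: I2_def L2_def)
  moreover have "L2 S \<subseteq> {u. length u = 2}" by (auto simp: L2_def)
  moreover have "finite (L2 S)" using A2_finite by (rule rev_finite_subset) (auto simp: L2_def)
  ultimately show ?thesis using A2_card card_Diff_subset by metis
qed

lemma path_legal:
  fixes S :: "'a::finite \<Rightarrow> 'a list"
  assumes ne: "nonerasing S" and ga: "good_approximant S \<omega>0"
  shows "\<exists>j \<le> card (I2 S). [bseq S (\<omega>0 i) j, cseq S (\<omega>0 (i+1)) j] \<in> legal_words S"
proof (rule ccontr)
  let ?b = "\<omega>0 i" and ?c = "\<omega>0 (i+1)" and ?K = "card (I2 S)"
  assume "\<not> ?thesis"
  then have il: "[bseq S ?b j, cseq S ?c j] \<notin> legal_words S" if "j \<le> ?K" for j using that by blast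
  define vs where "vs = map (\<lambda>j. [bseq S ?b j, cseq S ?c j]) [0..<Suc ?K]"
  have len: "length vs = Suc ?K" by (simp add: vs_def)
  have hdv: "hd vs = [\<omega>0 i, \<omega>0 (i + 1)]" by (simp add: vs_def upt_conv_Cons del: upt_Suc)
  have "G_path S vs"
    unfolding G_path_def
  proof (intro conjI allI impI)
    show "vs \<noteq> []" by (simp add: vs_def)
    show "length (hd vs) = 2" by (simp add: hdv)
  next
    fix q assume q: "Suc q < length vs"
    have e1: "vs ! q = [bseq S ?b q, cseq S ?c q]" and e2: "vs ! Suc q = [bseq S ?b (Suc q), cseq S ?c (Suc q)]"
      using q by (simp_all add: vs_def nth_append del: upt_Suc)
    show "G_edge S (vs ! q) (vs ! Suc q)"
      unfolding G_edge_def e1 e2 using il[of q] il[of "Suc q"] q edge_sub[OF ne] by (simp add: len)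
  qed
  moreover note hdv
  ultimately have dist: "distinct vs" using ga unfolding good_approximant_def by blast
  have "set vs \<subseteq> I2 S" using il by (auto simp: vs_def I2_def)
  moreover have "finite (I2 S)" using A2_finite by (rule rev_finite_subset) (auto simp: I2_def)
  ultimately have "card (set vs) \<le> ?K" by (rule card_mono[rotated])
  then show False using distinct_card[OF dist] len by simp
qed

context gsetup begin

lemma legal_follow:
  assumes th: "\<theta> > 1" and pr: "primitive_subst S"
  shows "\<exists>y. [x, y] \<in> legal_words S"
proof -
  obtain p where p: "\<And>a b. b \<in> set (Tn S p a)" using pr by (auto simp: primitive_subst_def Tn_def)
  obtain a0 :: 'a where True by simp
  let ?k = "card (UNIV :: 'a set)"
  have "Tn S ?k a0 \<noteq> []" using Tn_len_ge1[of ?k a0] by auto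
  then obtain y1 rest where w: "Tn S ?k a0 = y1 # rest" by (meson neq_Nil_conv)
  have "2 \<le> length (Tn S ?k a0)" by (rule Tn_ge2[OF th])
  then have rne: "rest \<noteq> []" using w by auto
  let ?R = "(subst_word S ^^ p) rest"
  have Rne: "?R \<noteq> []" using length_iter_ge[OF ne, of rest p] rne by auto
  have big: "Tn S (p + ?k) a0 = Tn S p y1 @ ?R" using Tn_add[of S p ?k a0] w by (simp add: iter_Cons)
  obtain u v where uv: "Tn S p y1 = u @ x # v" using p[where a=y1 and b=x] split_list[of x "Tn S p y1"] by blast
  show ?thesis
  proof (cases v)
    case Nil
    have "Tn S (p + ?k) a0 = u @ [x, hd ?R] @ tl ?R" using big uv Nil Rne by simp
    then have "sublist [x, hd ?R] (Tn S (p + ?k) a0)" by (metis sublist_appendI)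
    then have "[x, hd ?R] \<in> legal_words S" by (rule legal_sub[OF legal_Tn])
    then show ?thesis by blast
  next
    case (Cons v1 v')
    have "Tn S (p + ?k) a0 = u @ [x, v1] @ (v' @ ?R)" using big uv Cons by simp
    then have "sublist [x, v1] (Tn S (p + ?k) a0)" by (metis sublist_appendI)
    then have "[x, v1] \<in> legal_words S" by (rule legal_sub[OF legal_Tn])
    then show ?thesis by blast
  qed
qed


lemma L2_card:
  assumes th: "\<theta> > 1" and pr: "primitive_subst S"
  shows "card (UNIV :: 'a set) \<le> card (L2 S)"
proof -
  define f where "f x = [x, SOME y. [x, y] \<in> legal_words S]" for x
  have "f x \<in> L2 S" for x
    using someI_ex[OF legal_follow[OF th pr, of x]] by (simp add: f_def L2_def)
  moreover have "inj f" by (rule injI) (simp add: f_def)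
  moreover have "finite (L2 S)" using A2_finite by (rule rev_finite_subset) (auto simp: L2_def)
  ultimately show ?thesis using card_inj_on_le[of f UNIV "L2 S"] by (simp add: image_subset_iff)
qed

lemma core:
  assumes th: "\<theta> > 1" and pr: "primitive_subst S" and ga: "good_approximant S \<omega>0"
    and tn: "t + card (UNIV :: 'a set) ^ 2 \<le> n" and rt: "real r < 2 * Cc * \<theta> ^ t"
    and u: "sublist u (Tn S n (\<omega>0 i) @ Tn S n (\<omega>0 (i+1)))" "length u = r"
  shows "u \<in> legal_words S"
proof -
  let ?k = "card (UNIV :: 'a set)" and ?b = "\<omega>0 i" and ?c = "\<omega>0 (i+1)"
  obtain j where j: "j \<le> card (I2 S)" "[bseq S ?b j, cseq S ?c j] \<in> legal_words S"
    using path_legal[OF ne ga] by blast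
  have "card (I2 S) \<le> ?k ^ 2 - ?k" using I2_card[of S] L2_card[OF th pr] by simp
  moreover have k1: "1 \<le> ?k" using card_gt_0_iff[of "UNIV :: 'a set"] by simp
  moreover have kk: "?k \<le> ?k * ?k" using k1 by simp
  ultimately have "j \<le> ?k * ?k - ?k" using j(1) by (simp add: power2_eq_square)
  then have jk: "j + ?k \<le> ?k ^ 2" using kk unfolding power2_eq_square by linarith
  define N where "N = n - j"
  have nN: "n = N + j" using tn jk by (simp add: N_def)
  have tN: "t + ?k \<le> N" using tn jk by (simp add: N_def)
  obtain pre where pre: "Tn S j ?b = pre @ [bseq S ?b j]" using bseq_dec[OF ne] by blast
  obtain post where post: "Tn S j ?c = cseq S ?c j # post" using cseq_dec[OF ne] by blast
  let ?X = "(subst_word S ^^ N) pre" and ?Y = "Tn S N (bseq S ?b j)"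
    and ?Z = "Tn S N (cseq S ?c j)" and ?W = "(subst_word S ^^ N) post"
  have eb: "Tn S n ?b = ?X @ ?Y" unfolding nN Tn_add pre by (simp add: iter_Cons)
  have ec: "Tn S n ?c = ?Z @ ?W" unfolding nN Tn_add post by (simp add: iter_Cons)
  have "real r \<le> real (length ?Y)" using Tn_big[OF th tN, of "bseq S ?b j"] rt by linarith
  then have lY: "length u \<le> length ?Y" using u(2) by simp
  have "real r \<le> real (length ?Z)" using Tn_big[OF th tN, of "cseq S ?c j"] rt by linarith
  then have lZ: "length u \<le> length ?Z" using u(2) by simp
  have s: "sublist u ((?X @ ?Y) @ (?Z @ ?W))" using u(1) eb ec by simp
  have lyz: "?Y @ ?Z \<in> legal_words S"
    using legal_iter[OF j(2), of N] by (simp add: iter_Cons)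
  have l1: "?X @ ?Y \<in> legal_words S" using legal_Tn[of S n ?b] eb by simp
  have l2: "?Z @ ?W \<in> legal_words S" using legal_Tn[of S n ?c] ec by simp
  from four_split[OF s lY lZ] show ?thesis
    using legal_sub[OF l1, of u] legal_sub[OF l2, of u] legal_sub[OF lyz, of u] by blast
qed

end



lemma win_inside:
  assumes "win Z a L = W" "j0 + r \<le> L"
  shows "win Z (a + int j0) r = take r (drop j0 W)"
proof (rule nth_equalityI)
  have "length W = L" using assms(1) by (metis length_win)
  then show "length (win Z (a + int j0) r) = length (take r (drop j0 W))" using assms(2) by simp
next
  fix q assume q: "q < length (win Z (a + int j0) r)"
  then have q': "q < r" by simp
  have lW: "length W = L" using assms(1) by (metis length_win)
  have "take r (drop j0 W) ! q = W ! (j0 + q)" using q' assms(2) lW by simp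
  also have "\<dots> = win Z a L ! (j0 + q)" using assms(1) by simp
  also have "\<dots> = Z (a + int (j0 + q))" using q' assms(2) by simp
  finally show "win Z (a + int j0) r ! q = take r (drop j0 W) ! q" using q' by (simp add: add.assoc)
qed

lemma sublist_take_drop: "sublist (take r (drop j W)) W"
  by (meson sublist_drop sublist_order.order_trans sublist_take)

lemma two_blocks:
  assumes T: "nonerasing T" and big: "\<And>x. r \<le> length (T x)"
  shows "\<exists>k. sublist (win (subst_conf T \<omega>) i r) (T (\<omega> k) @ T (\<omega> (k+1)))"
proof -
  obtain k j0 where kj: "i = conf_pos T \<omega> k + int j0" "j0 < length (T (\<omega> k))"
    using subst_conf_cover[OF T] by blast
  have w2: "win \<omega> k 2 = [\<omega> k, \<omega> (k+1)]" by (simp add: win_def numeral_2_eq_2)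
  let ?W = "T (\<omega> k) @ T (\<omega> (k+1))"
  have "win (subst_conf T \<omega>) (conf_pos T \<omega> k) (length ?W) = ?W"
    using subst_conf_concat[OF T, of \<omega> k 2] w2 by simp
  moreover have "j0 + r \<le> length ?W" using kj(2) big[of "\<omega> (k+1)"] by simp
  ultimately have "win (subst_conf T \<omega>) i r = take r (drop j0 ?W)" using kj(1) win_inside by blast
  then show ?thesis using sublist_take_drop by metis
qed

lemma in_orbit_closure: "X \<in> orbit_closure X"
  unfolding orbit_closure_def by (auto intro: exI[of _ 0])

lemma win_conf_words: "X \<in> \<Omega> \<Longrightarrow> win X i r \<in> conf_words \<Omega>"
  unfolding conf_words_def win_def by auto

lemma conf_words_orbit:
  assumes "u \<in> conf_words (orbit_closure X)"
  shows "\<exists>i. u = win X i (length u)"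
proof -
  obtain \<omega> i where o: "\<omega> \<in> orbit_closure X" and u: "u = win \<omega> i (length u)"
    using assms unfolding conf_words_def win_def by auto
  obtain k where k: "\<And>i'. \<bar>i'\<bar> \<le> int (nat \<bar>i\<bar> + length u) \<Longrightarrow> \<omega> i' = X (i' + k)"
    using o unfolding orbit_closure_def by blast
  have "win \<omega> i (length u) = win X (i + k) (length u)"
  proof (rule nth_equalityI)
    fix q assume "q < length (win \<omega> i (length u))"
    then have q: "q < length u" by simp
    have "\<bar>i + int q\<bar> \<le> int (nat \<bar>i\<bar> + length u)" using q by simp
    then show "win \<omega> i (length u) ! q = win X (i + k) (length u) ! q" using q k by (simp add: ac_simps)
  qed simp
  then show ?thesis using u by metis
qed

context gsetup begin

lemma theta1_single:
  assumes th: "\<theta> = 1" and pr: "primitive_subst S"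
  shows "length (S a) = 1"
proof (rule ccontr)
  assume "length (S a) \<noteq> 1"
  moreover have "S a \<noteq> []" using ne by (simp add: nonerasing_def)
  then have "length (S a) \<noteq> 0" by simp
  ultimately have y2: "2 \<le> length (S a)" by linarith
  obtain p where p: "\<And>z b. b \<in> set (Tn S p z)" using pr by (auto simp: primitive_subst_def Tn_def)
  have step: "Suc (length w) \<le> length ((subst_word S ^^ Suc p) w)" if wne: "w \<noteq> []" for w
  proof -
    obtain z rest where w: "w = z # rest" using wne by (meson neq_Nil_conv)
    have "a \<in> set ((subst_word S ^^ p) w)" using p[where z=z and b=a] w by (simp add: iter_Cons)
    then obtain u v where uv: "(subst_word S ^^ p) w = u @ a # v" by (meson split_list)
    have "(subst_word S ^^ Suc p) w = subst_word S u @ S a @ subst_word S v" using uv by simp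
    then have "length ((subst_word S ^^ Suc p) w) \<ge> length u + 2 + length v"
      using length_subst_word_ge[OF ne, of u] length_subst_word_ge[OF ne, of v] y2 by simp
    moreover have "length w \<le> length u + 1 + length v" using length_iter_ge[OF ne, of w p] uv by simp
    ultimately show ?thesis by simp
  qed
  have grow: "Suc l \<le> length (Tn S (l * Suc p) a)" for l
  proof (induction l)
    case 0 then show ?case by (simp add: Tn_def)
  next
    case (Suc l)
    have "Tn S (Suc l * Suc p) a = (subst_word S ^^ Suc p) (Tn S (l * Suc p) a)"
      using Tn_add[of S "Suc p" "l * Suc p" a] by (simp add: ac_simps)
    moreover have "Tn S (l * Suc p) a \<noteq> []" using Tn_len_ge1[of "l * Suc p" a] by auto
    ultimately show ?case using step Suc by (metis Suc_le_mono le_trans)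
  qed
  define l where "l = nat \<lceil>Ch\<rceil>"
  have "Ch < real (Suc l)" unfolding l_def by linarith
  also have "\<dots> \<le> real (length (Tn S (l * Suc p) a))" using grow[of l] by linarith
  also have "\<dots> \<le> Ch" using Tn_upper[of "l * Suc p" a] th by simp
  finally show False by simp
qed

lemma theta1_eq:
  assumes th: "\<theta> = 1" and pr: "primitive_subst S"
  shows "(x::'a) = y"
proof -
  have lw: "length (subst_word S w) = length w" for w
    by (induction w) (auto simp: theta1_single[OF th pr])
  have l1: "length (Tn S n b) = 1" for n b
    by (induction n) (auto simp: Tn_Suc lw, simp add: Tn_def)
  obtain p where p: "\<And>z b. b \<in> set (Tn S p z)" using pr by (auto simp: primitive_subst_def Tn_def)
  obtain z where "Tn S p x = [z]" using l1[of p x] by (cases "Tn S p x") auto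
  then show ?thesis using p[where z=x and b=x] p[where z=x and b=y] by simp
qed

end



theorem mainTheorem4:
  fixes S :: "'a::finite \<Rightarrow> 'a list"
    and \<theta> C_S Cc Ch :: real and r :: nat and \<omega>0 :: "int \<Rightarrow> 'a"
  assumes "nonerasing S"
    and "primitive_subst S"
    and "pf_eigenvalue S \<theta>"
    and "lin_rep_const S C_S"
    and "growth_consts S \<theta> Cc Ch"
  shows "(\<forall>n::nat. real n \<ge> ln (real r) / ln \<theta> + (ln C_S - ln Cc) / ln \<theta> \<longrightarrow>
            words_of_len (legal_words S) r \<subseteq> words_of_len (conf_words (Omega_n S n \<omega>0)) r)
       \<and> (good_approximant S \<omega>0 \<longrightarrow>
          (\<forall>n::nat. real n > ln (real r) / ln \<theta> - ln (2 * Cc) / ln \<theta> + real (card (UNIV :: 'a set) ^ 2) \<longrightarrow>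
            words_of_len (conf_words (Omega_n S n \<omega>0)) r \<subseteq> words_of_len (legal_words S) r))"
proof -
  interpret gsetup S \<theta> Cc Ch using assms by unfold_locales
  note ne = assms(1) and pr = assms(2)
  let ?k = "card (UNIV :: 'a set)"
  have Om: "Omega_n S n \<omega>0 = orbit_closure (subst_conf (Tn S n) \<omega>0)" for n
    unfolding Omega_n_def iter_conf[OF ne] ..
  show ?thesis
  proof (cases "\<theta> = 1")
    case True
    have eq: "\<And>x y :: 'a. x = y" using theta1_eq[OF True pr] by blast
    have P1: "words_of_len (legal_words S) r \<subseteq> words_of_len (conf_words (Omega_n S n \<omega>0)) r" for n
    proof
      fix u assume "u \<in> words_of_len (legal_words S) r"
      then have lu: "length u = r" by (simp add: words_of_len_def)
      have "u = win (subst_conf (Tn S n) \<omega>0) 0 r"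
        by (rule nth_equalityI) (auto simp: lu intro: eq)
      then show "u \<in> words_of_len (conf_words (Omega_n S n \<omega>0)) r"
        unfolding words_of_len_def Om using win_conf_words[OF in_orbit_closure] lu by simp
    qed
    let ?z = "\<omega>0 0"
    have l1: "length (Tn S n b) = 1" for n b
    proof -
      have lw: "length (subst_word S w) = length w" for w
        by (induction w) (auto simp: theta1_single[OF True pr])
      show ?thesis by (induction n) (auto simp: Tn_Suc lw, simp add: Tn_def)
    qed
    have nl: "[?z, ?z] \<notin> legal_words S"
    proof
      assume "[?z, ?z] \<in> legal_words S"
      then obtain n a where "sublist [?z, ?z] (Tn S n a)" by (auto simp: legal_words_def Tn_def)
      then show False using sublist_length_le l1[of n a] by fastforce
    qed
    have Sz: "S ?z = [?z]"
    proof -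
      have "length (S ?z) = 1" by (rule theta1_single[OF True pr])
      then show ?thesis by (cases "S ?z") (auto intro: eq)
    qed
    have "\<not> good_approximant S \<omega>0"
    proof
      assume ga: "good_approximant S \<omega>0"
      let ?vs = "[[?z, ?z], [?z, ?z]]"
      have "G_edge S [?z, ?z] [?z, ?z]" using nl Sz by (simp add: G_edge_def)
      then have "G_path S ?vs" by (auto simp: G_path_def less_Suc_eq)
      moreover have "hd ?vs = [\<omega>0 0, \<omega>0 (0 + 1)]" using eq by simp
      ultimately have "distinct ?vs" using ga unfolding good_approximant_def by blast
      then show False by simp
    qed
    then show ?thesis using P1 by blast
  next
    case False
    then have th: "\<theta> > 1" using theta_ge1 by simp
    have lt: "ln \<theta> > 0" using th by simp
    have tpos: "\<theta> > 0" using th by simp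
    have CS: "C_S \<ge> 1" using assms(4) by (simp add: lin_rep_const_def)
    have part1: "words_of_len (legal_words S) r \<subseteq> words_of_len (conf_words (Omega_n S n \<omega>0)) r"
      if H: "real n \<ge> ln (real r) / ln \<theta> + (ln C_S - ln Cc) / ln \<theta>" for n
    proof
      fix u assume "u \<in> words_of_len (legal_words S) r"
      then have ul: "u \<in> legal_words S" and lu: "length u = r" by (auto simp: words_of_len_def)
      let ?X = "subst_conf (Tn S n) \<omega>0" and ?W = "Tn S n (\<omega>0 0)"
      have sub: "sublist u ?W"
      proof (cases "r = 0")
        case True then show ?thesis using lu by simp
      next
        case False
        then have rpos: "real r > 0" by simp
        have "(ln (real r) + (ln C_S - ln Cc)) / ln \<theta> \<le> real n" using H by (simp add: add_divide_distrib)
        then have "ln (real r) + (ln C_S - ln Cc) \<le> real n * ln \<theta>" using lt by (simp add: pos_divide_le_eq)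
        also have "\<dots> = ln (\<theta> ^ n)" using tpos by (simp add: ln_realpow)
        finally have "ln (real r * C_S / Cc) \<le> ln (\<theta> ^ n)"
          using rpos CS Cc_pos by (simp add: ln_mult ln_div)
        then have "real r * C_S / Cc \<le> \<theta> ^ n" using rpos CS Cc_pos tpos by simp
        then have "C_S * real (length u) \<le> Cc * \<theta> ^ n" using Cc_pos lu by (simp add: field_simps)
        also have "\<dots> \<le> real (length ?W)" by (rule Tn_lower)
        finally show ?thesis using assms(4) ul legal_Tn[of S n "\<omega>0 0"] unfolding lin_rep_const_def by blast
      qed
      then obtain ps ss where W: "?W = ps @ u @ ss" by (auto simp: sublist_def)
      have bw: "win ?X 0 (length ?W) = ?W" using block_win[OF nonerasing_Tn[OF ne], where \<omega>=\<omega>0 and k=0] by (simp add: conf_pos_0)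
      have "win ?X (0 + int (length ps)) r = take r (drop (length ps) ?W)"
        by (rule win_inside[OF bw]) (simp add: W lu)
      also have "\<dots> = u" using W lu by simp
      finally have "u = win ?X (int (length ps)) r" by simp
      then show "u \<in> words_of_len (conf_words (Omega_n S n \<omega>0)) r"
        unfolding words_of_len_def Om using win_conf_words[OF in_orbit_closure] lu by simp
    qed
    have part2: "words_of_len (conf_words (Omega_n S n \<omega>0)) r \<subseteq> words_of_len (legal_words S) r"
      if ga: "good_approximant S \<omega>0"
      and H: "real n > ln (real r) / ln \<theta> - ln (2 * Cc) / ln \<theta> + real (?k ^ 2)" for n
    proof
      fix u assume "u \<in> words_of_len (conf_words (Omega_n S n \<omega>0)) r"
      then have uc: "u \<in> conf_words (orbit_closure (subst_conf (Tn S n) \<omega>0))" and lu: "length u = r"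
        by (auto simp: words_of_len_def Om)
      obtain i where ui: "u = win (subst_conf (Tn S n) \<omega>0) i r" using conf_words_orbit[OF uc] lu by metis
      have "u \<in> legal_words S"
      proof (cases "r \<le> 1")
        case True then show ?thesis using legal_short lu by blast
      next
        case False
        then have r2: "real r \<ge> 2" by simp
        have "(ln (real r) - ln (2 * Cc)) / ln \<theta> < real n - real (?k ^ 2)" using H by (simp add: diff_divide_distrib)
        then have A: "ln (real r) - ln (2 * Cc) < (real n - real (?k ^ 2)) * ln \<theta>" using lt by (simp add: pos_divide_less_eq)
        have Cc1: "Cc \<le> 1" by (rule Cc_le1)
        have lnr: "ln (real r) - ln (2 * Cc) = ln (real r / (2 * Cc))" using r2 Cc_pos by (simp add: ln_div)
        have nk: "?k ^ 2 \<le> n"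
        proof (rule ccontr)
          assume "\<not> ?k ^ 2 \<le> n"
          then have "(real n - real (?k ^ 2)) * ln \<theta> < 0" using lt by (simp add: mult_neg_pos)
          then have "ln (real r / (2 * Cc)) < 0" using A lnr by linarith
          then have "real r / (2 * Cc) < 1" using r2 Cc_pos by (simp add: ln_less_zero_iff)
          then have "real r < 2 * Cc" using Cc_pos by (simp add: field_simps)
          then show False using r2 Cc1 by linarith
        qed
        define t where "t = n - ?k ^ 2"
        have tr: "real t = real n - real (?k ^ 2)" using nk by (simp add: t_def)
        have "ln (real r / (2 * Cc)) < ln (\<theta> ^ t)" using A lnr tr tpos by (simp add: ln_realpow)
        then have "real r / (2 * Cc) < \<theta> ^ t" using r2 Cc_pos tpos by simp
        then have rt: "real r < 2 * Cc * \<theta> ^ t" using Cc_pos by (simp add: field_simps)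
        have k1: "1 \<le> ?k" using card_gt_0_iff[of "UNIV :: 'a set"] by simp
        have "?k \<le> ?k ^ 2" using k1 by (simp add: power2_eq_square)
        then have tk: "t + ?k \<le> n" using nk by (simp add: t_def)
        have big: "r \<le> length (Tn S n x)" for x
          using Tn_big[OF th tk, of x] rt by linarith
        obtain q where "sublist u (Tn S n (\<omega>0 q) @ Tn S n (\<omega>0 (q+1)))"
          using two_blocks[OF nonerasing_Tn[OF ne] big] ui by blast
        moreover have tn2: "t + ?k ^ 2 \<le> n" using nk by (simp add: t_def)
        ultimately show ?thesis using core[OF th pr ga tn2 rt _ lu] by blast
      qed
      then show "u \<in> words_of_len (legal_words S) r" using lu by (simp add: words_of_len_def)
    qed
    show ?thesis using part1 part2 by blast
  qed
qed


end
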